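(* Let $M$ be a triangulated compact 3-manifold, possibly with boundary, whose triangulation contains $t$ tetrahedra, and let $\mathcal{C}_M\subset\mathbb{R}^{7t}$ be its Haken normal cone. (1) Every minimal vertex solution $v\in\mathbb{Z}^{7t}$ of $\mathcal{C}_M$ satisfies $\max_{1\le i\le 7t} v_i\le 2^{7t-1}$. (2) Every element $v\in\mathbb{Z}^{7t}$ of the minimal Hilbert basis of $\mathcal{C}_M$ satisfies $\max_{1\le i\le 7t} v_i\le t\cdot 2^{7t+2}$.
   Context: Coordinates of $\mathbb{R}^{7t}$ are indexed by pairs (tetrahedron $T$, elementary normal disk type in $T$), where each tetrahedron has 7 types: 4 triangle types (separating one vertex from the other three) and 3 quadrilateral types (separating two vertices from the other two). The Haken normal cone $\mathcal{C}_M$ is the set of $v\in\mathbb{R}^{7t}$ with $v_i\ge0$ for all $i$ and satisfying the matching equations: for each face $F$ shared by two tetrahedra $T_1,T_2$ and each pair of sides of $F$, the sum of the two coordinates of disk types in $T_1$ that meet $F$ in an arc joining that pair of sides equals the corresponding sum for $T_2$ (each such equation has the form $v_{k_1}+v_{k_2}=v_{k_3}+v_{k_4}$). A minimal vertex solution is the smallest nonzero integer point on an extreme ray of $\mathcal{C}_M$. The minimal Hilbert basis of $\mathcal{C}_M$ is the set of nonzero $v\in\mathcal{C}_M\cap\mathbb{Z}^{7t}$ that cannot be written as $v_1+v_2$ with $v_1,v_2$ nonzero elements of $\mathcal{C}_M\cap\mathbb{Z}^{7t}$. *)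

theory Defs
  imports Complex_Main
begin

text \<open>Tetrahedra are numbered 0..t-1, each with vertices 0..3. The face of tetrahedron T
opposite vertex f is called face (T,f). A gluing gl T f = Some (T', s) means that face (T,f)
is identified with face (T', s f) of tetrahedron T' via the vertex bijection s (restricted to
the vertices of the face). Unglued faces (None) form the boundary.\<close>

type_synonym gluing = "nat \<Rightarrow> nat \<Rightarrow> (nat \<times> (nat \<Rightarrow> nat)) option"

definition valid_gluing :: "nat \<Rightarrow> gluing \<Rightarrow> bool" where
  "valid_gluing t gl \<longleftrightarrow>
     (\<forall>T f. (t \<le> T \<or> 4 \<le> f) \<longrightarrow> gl T f = None) \<and>
     (\<forall>T f T' s. gl T f = Some (T', s) \<longrightarrow>
        T' < t \<and> bij_betw s {..<4} {..<4} \<and> (T', s f) \<noteq> (T, f) \<and>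
        (\<exists>s'. gl T' (s f) = Some (T, s') \<and> (\<forall>i<4. s' (s i) = i)))"

definition corner_rel :: "gluing \<Rightarrow> ((nat \<times> nat) \<times> (nat \<times> nat)) set" where
  "corner_rel gl = {((T, v), (T', s v)) | T v f T' s. gl T f = Some (T', s) \<and> v < 4 \<and> v \<noteq> f}"

text \<open>Identification of oriented edges (T,a,b); equivalently of vertices of vertex links.\<close>
definition oedge_rel :: "gluing \<Rightarrow> ((nat \<times> nat \<times> nat) \<times> (nat \<times> nat \<times> nat)) set" where
  "oedge_rel gl = {((T, a, b), (T', s a, s b)) | T a b f T' s.
      gl T f = Some (T', s) \<and> a < 4 \<and> b < 4 \<and> a \<noteq> b \<and> f \<noteq> a \<and> f \<noteq> b}"

text \<open>Identification of edges of vertex links: (T,v,f) is the edge of the link triangle at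
corner (T,v) lying in face (T,f).\<close>
definition linkedge_rel :: "gluing \<Rightarrow> ((nat \<times> nat \<times> nat) \<times> (nat \<times> nat \<times> nat)) set" where
  "linkedge_rel gl = {((T, v, f), (T', s v, s f)) | T v f T' s.
      gl T f = Some (T', s) \<and> v < 4 \<and> v \<noteq> f}"

definition eqv :: "('a \<times> 'a) set \<Rightarrow> ('a \<times> 'a) set" where
  "eqv R = (R \<union> R\<inverse>)\<^sup>*"

text \<open>The vertex link of the vertex of M containing corner c: its triangles, edges, vertices.\<close>
definition link_tris :: "gluing \<Rightarrow> nat \<times> nat \<Rightarrow> (nat \<times> nat) set" where
  "link_tris gl c = eqv (corner_rel gl) `` {c}"

definition link_edges :: "gluing \<Rightarrow> nat \<times> nat \<Rightarrow> (nat \<times> nat \<times> nat) set" where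
  "link_edges gl c = {(T, v, f). (T, v) \<in> link_tris gl c \<and> f < 4 \<and> f \<noteq> v}"

definition link_verts :: "gluing \<Rightarrow> nat \<times> nat \<Rightarrow> (nat \<times> nat \<times> nat) set" where
  "link_verts gl c = {(T, v, w). (T, v) \<in> link_tris gl c \<and> w < 4 \<and> w \<noteq> v}"

definition link_euler :: "gluing \<Rightarrow> nat \<times> nat \<Rightarrow> int" where
  "link_euler gl c =
     int (card (link_verts gl c // eqv (oedge_rel gl)))
   - int (card (link_edges gl c // eqv (linkedge_rel gl)))
   + int (card (link_tris gl c))"

definition link_has_boundary :: "gluing \<Rightarrow> nat \<times> nat \<Rightarrow> bool" where
  "link_has_boundary gl c \<longleftrightarrow> (\<exists>(T, v, f) \<in> link_edges gl c. gl T f = None)"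

text \<open>The glued space is a compact 3-manifold (possibly with boundary): every (connected)
vertex link is a 2-sphere (closed, Euler characteristic 2) or a disk (with boundary, Euler
characteristic 1), and no edge is identified with itself in reverse.\<close>
definition triangulated_3manifold :: "nat \<Rightarrow> gluing \<Rightarrow> bool" where
  "triangulated_3manifold t gl \<longleftrightarrow>
     valid_gluing t gl \<and>
     (\<forall>T a b. T < t \<and> a < 4 \<and> b < 4 \<and> a \<noteq> b \<longrightarrow>
        ((T, a, b), (T, b, a)) \<notin> eqv (oedge_rel gl)) \<and>
     (\<forall>T v. T < t \<and> v < 4 \<longrightarrow>
        (\<not> link_has_boundary gl (T, v) \<and> link_euler gl (T, v) = 2) \<or>
        (link_has_boundary gl (T, v) \<and> link_euler gl (T, v) = 1))"

text \<open>Vectors of R^(7t) are functions nat => real vanishing at indices >= 7t. Coordinate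
7*T + d: for d < 4 the triangle type in T cutting off vertex d; for d = 3 + k (k = 1,2,3)
the quadrilateral type in T separating vertices {0,k} from the other two.\<close>

definition coord :: "nat \<Rightarrow> nat \<Rightarrow> nat" where
  "coord T d = 7 * T + d"

text \<open>Quad type separating the pair {a,b} from the complementary pair.\<close>
definition quad :: "nat \<Rightarrow> nat \<Rightarrow> nat" where
  "quad a b = 3 + (if a = 0 then b else if b = 0 then a else 6 - a - b)"

text \<open>Sum of the coordinates of disk types of T meeting face (T,f) in the normal arc that cuts
off vertex v of that face (i.e. the arc joining the two sides of the face incident to v): the
triangle at v and the quad separating {f,v} from the rest.\<close>
definition arc_sum :: "nat \<Rightarrow> nat \<Rightarrow> nat \<Rightarrow> (nat \<Rightarrow> real) \<Rightarrow> real" where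
  "arc_sum T f v x = x (coord T v) + x (coord T (quad f v))"

definition matching_eqns :: "gluing \<Rightarrow> (nat \<Rightarrow> real) \<Rightarrow> bool" where
  "matching_eqns gl x \<longleftrightarrow>
     (\<forall>T f T' s v. gl T f = Some (T', s) \<and> v < 4 \<and> v \<noteq> f \<longrightarrow>
        arc_sum T f v x = arc_sum T' (s f) (s v) x)"

definition haken_cone :: "nat \<Rightarrow> gluing \<Rightarrow> (nat \<Rightarrow> real) set" where
  "haken_cone t gl = {x. (\<forall>i. 7 * t \<le> i \<longrightarrow> x i = 0) \<and> (\<forall>i < 7 * t. 0 \<le> x i) \<and>
                         matching_eqns gl x}"

definition is_integral :: "(nat \<Rightarrow> real) \<Rightarrow> bool" where
  "is_integral x \<longleftrightarrow> (\<forall>i. x i \<in> \<int>)"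

definition ray :: "(nat \<Rightarrow> real) \<Rightarrow> (nat \<Rightarrow> real) set" where
  "ray r = {(\<lambda>i. c * r i) | c. 0 \<le> c}"

definition extreme_ray :: "(nat \<Rightarrow> real) set \<Rightarrow> (nat \<Rightarrow> real) \<Rightarrow> bool" where
  "extreme_ray C r \<longleftrightarrow> r \<in> C \<and> r \<noteq> (\<lambda>i. 0) \<and>
     (\<forall>a\<in>C. \<forall>b\<in>C. (\<lambda>i. a i + b i) = r \<longrightarrow> a \<in> ray r \<and> b \<in> ray r)"

definition minimal_vertex_solution :: "nat \<Rightarrow> gluing \<Rightarrow> (nat \<Rightarrow> real) \<Rightarrow> bool" where
  "minimal_vertex_solution t gl v \<longleftrightarrow>
     (\<exists>r. extreme_ray (haken_cone t gl) r \<and> v \<in> ray r \<and> v \<noteq> (\<lambda>i. 0) \<and> is_integral v \<and>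
        (\<forall>w \<in> ray r. w \<noteq> (\<lambda>i. 0) \<and> is_integral w \<longrightarrow> (\<exists>c\<ge>1. w = (\<lambda>i. c * v i))))"

definition hilbert_basis :: "nat \<Rightarrow> gluing \<Rightarrow> (nat \<Rightarrow> real) set" where
  "hilbert_basis t gl = {v. v \<in> haken_cone t gl \<and> is_integral v \<and> v \<noteq> (\<lambda>i. 0) \<and>
     \<not> (\<exists>a b. a \<in> haken_cone t gl \<and> b \<in> haken_cone t gl \<and> is_integral a \<and> is_integral b \<and>
            a \<noteq> (\<lambda>i. 0) \<and> b \<noteq> (\<lambda>i. 0) \<and> v = (\<lambda>i. a i + b i))}"

end

theory Submission
  imports Defs "Jordan_Normal_Form.Determinant"
begin


definition qf :: "nat \<Rightarrow> real mat \<Rightarrow> (nat \<Rightarrow> real) \<Rightarrow> real" where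
  "qf N G x = (\<Sum>i<N. \<Sum>j<N. x i * G $$ (i,j) * x j)"

lemma sum_two_pts:
  fixes f :: "nat \<Rightarrow> real"
  assumes "p < N" "q < N" "p \<noteq> q"
  shows "(\<Sum>j<N. f j * (if j = p then a else if j = q then b else 0)) = f p * a + f q * b"
proof -
  have "(\<lambda>j. f j * (if j = p then a else if j = q then b else 0))
      = (\<lambda>j. (if j = p then f j * a else 0) + (if j = q then f j * b else 0))"
    using assms by auto
  then show ?thesis apply (subst (asm) fun_eq_iff)
    using assms by (simp add: sum.distrib)
qed

lemma sum_one_pt:
  fixes f :: "nat \<Rightarrow> real"
  assumes "p < N"
  shows "(\<Sum>j<N. f j * (if j = p then a else 0)) = f p * a"
proof -
  have "(\<lambda>j. f j * (if j = p then a else 0)) = (\<lambda>j. (if j = p then f j * a else 0))"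
    by auto
  then show ?thesis apply (subst (asm) fun_eq_iff) using assms by simp
qed

lemma qf_two:
  assumes "p < N" "q < N" "p \<noteq> q"
  shows "qf N G (\<lambda>l. if l = p then a else if l = q then b else 0)
       = a * a * G $$ (p,p) + a * b * (G $$ (p,q) + G $$ (q,p)) + b * b * G $$ (q,q)"
proof -
  let ?x = "\<lambda>l. if l = p then a else if l = q then b else 0"
  have "qf N G ?x = (\<Sum>i<N. (G $$ (i,p) * a + G $$ (i,q) * b) * ?x i)"
    unfolding qf_def
  proof (rule sum.cong[OF refl])
    fix i assume "i \<in> {..<N}"
    have "(\<Sum>j<N. ?x i * G $$ (i, j) * ?x j) = ?x i * (\<Sum>j<N. G $$ (i, j) * ?x j)"
      by (simp add: sum_distrib_left mult.assoc)
    also have "\<dots> = ?x i * (G $$ (i,p) * a + G $$ (i,q) * b)"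
      using sum_two_pts[OF assms, of "\<lambda>j. G $$ (i,j)" a b] by simp
    finally show "(\<Sum>j<N. ?x i * G $$ (i, j) * ?x j) = (G $$ (i,p) * a + G $$ (i,q) * b) * ?x i"
      by simp
  qed
  also have "\<dots> = (G $$ (p,p) * a + G $$ (p,q) * b) * a + (G $$ (q,p) * a + G $$ (q,q) * b) * b"
    by (rule sum_two_pts[OF assms])
  finally show ?thesis by (simp add: algebra_simps)
qed

lemma qf_one:
  assumes "p < N"
  shows "qf N G (\<lambda>l. if l = p then 1 else 0) = G $$ (p,p)"
proof -
  let ?x = "\<lambda>l. if l = p then (1::real) else 0"
  have "qf N G ?x = (\<Sum>i<N. G $$ (i,p) * ?x i)"
    unfolding qf_def
  proof (rule sum.cong[OF refl])
    fix i assume "i \<in> {..<N}"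
    have "(\<Sum>j<N. ?x i * G $$ (i, j) * ?x j) = ?x i * (\<Sum>j<N. G $$ (i, j) * ?x j)"
      by (simp add: sum_distrib_left mult.assoc)
    also have "\<dots> = ?x i * G $$ (i,p)"
      using sum_one_pt[OF assms, of "\<lambda>j. G $$ (i,j)" 1] by simp
    finally show "(\<Sum>j<N. ?x i * G $$ (i, j) * ?x j) = G $$ (i,p) * ?x i" by simp
  qed
  also have "\<dots> = G $$ (p,p)" using sum_one_pt[OF assms, of "\<lambda>i. G $$ (i,p)" 1] by simp
  finally show ?thesis .
qed

lemma psd_det_le:
  fixes G :: "real mat"
  assumes "G \<in> carrier_mat N N" "\<And>i j. i < N \<Longrightarrow> j < N \<Longrightarrow> G $$ (i,j) = G $$ (j,i)"
    "\<And>x. 0 \<le> qf N G x"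
  shows "det G \<le> (\<Prod>i<N. G $$ (i,i))"
  using assms
proof (induction N arbitrary: G)
  case 0
  then show ?case by simp
next
  case (Suc N)
  have diag: "0 \<le> G $$ (i,i)" if "i < Suc N" for i
    using Suc.prems(3)[of "\<lambda>l. if l = i then 1 else 0"] qf_one[OF that, of G] by simp
  define a where "a = G $$ (0,0)"
  show ?case
  proof (cases "a = 0")
    case True
    have row0: "G $$ (0,j) = 0" if j: "j < Suc N" for j
    proof (cases "j = 0")
      case True
      then show ?thesis using \<open>a = 0\<close> a_def by simp
    next
      case False
      define g where "g = G $$ (0,j)"
      define d where "d = G $$ (j,j)"
      have sym: "G $$ (j,0) = g" using Suc.prems(2)[of j 0] j g_def by auto
      have key: "0 \<le> 2 * s * g + d" for s
      proof -
        have "0 \<le> qf (Suc N) G (\<lambda>l. if l = 0 then s else if l = j then 1 else 0)"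
          by (rule Suc.prems(3))
        also have "\<dots> = s * s * a + s * 1 * (g + G $$ (j,0)) + 1 * 1 * d"
          using qf_two[of 0 "Suc N" j G s 1] j False a_def g_def d_def by simp
        finally show ?thesis using True sym by simp
      qed
      show ?thesis
      proof (rule ccontr)
        assume "G $$ (0, j) \<noteq> 0"
        then have "g \<noteq> 0" by (simp add: g_def)
        have "0 \<le> 2 * (- (d + 1) / (2 * g)) * g + d" by (rule key)
        also have "\<dots> = -1" using \<open>g \<noteq> 0\<close> by (simp add: field_simps)
        finally show False by simp
      qed
    qed
    have "det G = (\<Sum>j<Suc N. G $$ (0,j) * cofactor G 0 j)"
      by (rule laplace_expansion_row[OF Suc.prems(1)]) simp
    also have "\<dots> = 0" using row0 by simp
    finally have "det G = 0" .
    moreover have "0 \<le> (\<Prod>i<Suc N. G $$ (i,i))" by (rule prod_nonneg) (use diag in auto)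
    ultimately show ?thesis by simp
  next
    case False
    then have apos: "a > 0" using diag[of 0] a_def by simp
    define S where "S = mat N N (\<lambda>(i,j). G $$ (Suc i, Suc j) - G $$ (Suc i,0) * G $$ (0,Suc j) / a)"
    define E where "E = mat (Suc N) (Suc N) (\<lambda>(i,j). if i = j then 1 else if j = 0 then - G $$ (i,0) / a else 0)"
    have E: "E \<in> carrier_mat (Suc N) (Suc N)" by (simp add: E_def)
    have detE: "det E = 1"
    proof -
      have "det E = prod_list (diag_mat E)"
        by (rule det_lower_triangular[OF _ E]) (simp add: E_def)
      also have "diag_mat E = map (\<lambda>i. 1) [0..<Suc N]"
        by (simp add: diag_mat_def E_def)
      also have "prod_list \<dots> = 1" by (induction N) auto
      finally show ?thesis .
    qed
    have EG: "(E * G) $$ (i,j) = G $$ (i,j) - (if i = 0 then 0 else G $$ (i,0) / a * G $$ (0,j))"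
      if i: "i < Suc N" and j: "j < Suc N" for i j
    proof -
      have "(E * G) $$ (i,j) = (\<Sum>k<Suc N. E $$ (i,k) * G $$ (k,j))"
        using i j E Suc.prems(1) by (simp add: scalar_prod_def lessThan_atLeast0)
      also have "\<dots> = (\<Sum>k<Suc N. G $$ (k,j) * (if k = i then 1 else 0)
                       + G $$ (k,j) * (if k = 0 then (if i = 0 then 0 else - G $$ (i,0) / a) else 0))"
        using i by (intro sum.cong) (auto simp: E_def)
      also have "\<dots> = G $$ (i,j) + G $$ (0,j) * (if i = 0 then 0 else - G $$ (i,0) / a)"
        by (simp only: sum.distrib sum_one_pt[OF i] sum_one_pt[of 0 "Suc N"] zero_less_Suc)
      finally show ?thesis by auto
    qed
    have detEG: "det (E * G) = det G" using det_mult[OF E Suc.prems(1)] detE by simp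
    have EGc: "E * G \<in> carrier_mat (Suc N) (Suc N)" using E Suc.prems(1) by simp
    have "det (E * G) = (\<Sum>i<Suc N. (E * G) $$ (i,0) * cofactor (E * G) i 0)"
      by (rule laplace_expansion_column[OF EGc]) simp
    also have "\<dots> = (E * G) $$ (0,0) * cofactor (E * G) 0 0"
    proof -
      have "(E * G) $$ (Suc i,0) = 0" if "i < N" for i
        using EG[of "Suc i" 0] that apos a_def by simp
      then show ?thesis by (simp add: sum.lessThan_Suc_shift del: sum.lessThan_Suc)
    qed
    also have "\<dots> = a * det (mat_delete (E * G) 0 0)"
      using EG[of 0 0] a_def by (simp add: cofactor_def)
    also have "mat_delete (E * G) 0 0 = S"
    proof (rule eq_matI)
      show "dim_row (mat_delete (E * G) 0 0) = dim_row S" using E Suc.prems(1) by (simp add: S_def)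
      show "dim_col (mat_delete (E * G) 0 0) = dim_col S" using E Suc.prems(1) by (simp add: S_def)
      fix i j assume "i < dim_row S" "j < dim_col S"
      then have "i < N" "j < N" by (auto simp: S_def)
      then show "mat_delete (E * G) 0 0 $$ (i,j) = S $$ (i,j)"
        using EG[of "Suc i" "Suc j"] E Suc.prems(1) by (simp add: mat_delete_def S_def)
    qed
    finally have detG: "det G = a * det S" using detEG by simp
    have Sc: "S \<in> carrier_mat N N" by (simp add: S_def)
    have Ssym: "S $$ (i,j) = S $$ (j,i)" if "i < N" "j < N" for i j
      using that Suc.prems(2)[of "Suc i" "Suc j"] Suc.prems(2)[of "Suc i" 0] Suc.prems(2)[of 0 "Suc j"]
        Suc.prems(2)[of "Suc j" 0] Suc.prems(2)[of 0 "Suc i"]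
      by (simp add: S_def)
    have Spsd: "0 \<le> qf N S x" for x
    proof -
      define b where "b = (\<Sum>j<N. G $$ (0, Suc j) * x j)"
      define Q where "Q = (\<Sum>i<N. \<Sum>j<N. x i * G $$ (Suc i, Suc j) * x j)"
      have c: "(\<Sum>i<N. x i * G $$ (Suc i, 0)) = b"
        unfolding b_def using Suc.prems(2)[of _ 0] by (intro sum.cong) auto
      define y where "y = (\<lambda>l. if l = 0 then - b / a else x (l - 1))"
      have "qf N S x = Q - (\<Sum>i<N. x i * G $$ (Suc i, 0)) * (\<Sum>j<N. G $$ (0, Suc j) * x j) / a"
        unfolding qf_def Q_def S_def sum_product sum_divide_distrib
        by (simp add: sum_subtractf[symmetric] algebra_simps)
      also have "\<dots> = Q - b * b / a" using c b_def by simp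
      finally have 1: "qf N S x = Q - b * b / a" .
      have y0: "y 0 = - b / a" and ys: "\<And>j. y (Suc j) = x j" by (simp_all add: y_def)
      have "qf (Suc N) G y = (y 0 * G $$ (0,0) * y 0 + (\<Sum>j<N. y 0 * G $$ (0,Suc j) * y (Suc j)))
          + (\<Sum>i<N. y (Suc i) * G $$ (Suc i,0) * y 0 + (\<Sum>j<N. y (Suc i) * G $$ (Suc i,Suc j) * y (Suc j)))"
        unfolding qf_def by (simp only: sum.lessThan_Suc_shift)
      also have "(\<Sum>j<N. y 0 * G $$ (0,Suc j) * y (Suc j)) = y 0 * b"
        by (simp add: b_def sum_distrib_left mult.assoc ys)
      also have "(\<Sum>i<N. y (Suc i) * G $$ (Suc i,0) * y 0 + (\<Sum>j<N. y (Suc i) * G $$ (Suc i,Suc j) * y (Suc j)))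
          = (\<Sum>i<N. x i * G $$ (Suc i, 0)) * y 0 + Q"
        by (simp add: sum.distrib sum_distrib_right Q_def ys)
      also have "y 0 * G $$ (0,0) * y 0 + y 0 * b + ((\<Sum>i<N. x i * G $$ (Suc i, 0)) * y 0 + Q) = Q - b * b / a"
      proof -
        have "y 0 * G $$ (0,0) * y 0 = b * b / a" using apos unfolding y0 a_def[symmetric]
          by (simp add: power2_eq_square)
        moreover have "y 0 * b = - (b * b / a)" unfolding y0 by simp
        ultimately show ?thesis using c by (simp add: mult.commute)
      qed
      finally have 2: "qf (Suc N) G y = Q - b * b / a" .
      show ?thesis using 1 2 Suc.prems(3)[of y] by simp
    qed
    have IH: "det S \<le> (\<Prod>i<N. S $$ (i,i))" by (rule Suc.IH[OF Sc Ssym Spsd])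
    have Sdiag: "0 \<le> S $$ (i,i)" if "i < N" for i
      using Spsd[of "\<lambda>l. if l = i then 1 else 0"] qf_one[OF that, of S] by simp
    have Sle: "S $$ (i,i) \<le> G $$ (Suc i, Suc i)" if "i < N" for i
    proof -
      have "G $$ (Suc i, 0) * G $$ (0, Suc i) / a \<ge> 0"
        using Suc.prems(2)[of "Suc i" 0] that apos by simp
      then show ?thesis using that by (simp add: S_def)
    qed
    have "(\<Prod>i<N. S $$ (i,i)) \<le> (\<Prod>i<N. G $$ (Suc i, Suc i))"
      by (rule prod_mono) (use Sdiag Sle in auto)
    then have "det G \<le> a * (\<Prod>i<N. G $$ (Suc i, Suc i))"
    proof -
      have "a * det S \<le> a * (\<Prod>i<N. S $$ (i,i))" using IH apos by simp
      also have "\<dots> \<le> a * (\<Prod>i<N. G $$ (Suc i, Suc i))"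
        using \<open>(\<Prod>i<N. S $$ (i,i)) \<le> _\<close> apos by simp
      finally show ?thesis using detG by simp
    qed
    also have "\<dots> = (\<Prod>i<Suc N. G $$ (i,i))" by (simp add: prod.lessThan_Suc_shift a_def del: prod.lessThan_Suc)
    finally show ?thesis .
  qed
qed


lemma hadamard:
  fixes M :: "real mat"
  assumes M: "M \<in> carrier_mat N N"
  shows "(det M)^2 \<le> (\<Prod>i<N. \<Sum>j<N. (M $$ (i,j))^2)"
proof -
  define G where "G = M * transpose_mat M"
  have Gc: "G \<in> carrier_mat N N" using M by (simp add: G_def)
  have Gij: "G $$ (i,j) = (\<Sum>k<N. M $$ (i,k) * M $$ (j,k))" if "i < N" "j < N" for i j
    using M that by (simp add: G_def scalar_prod_def lessThan_atLeast0)
  have detG: "det G = (det M)^2"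
    using det_mult[OF M, of "transpose_mat M"] det_transpose[OF M] M
    by (simp add: G_def power2_eq_square)
  have sym: "G $$ (i,j) = G $$ (j,i)" if "i < N" "j < N" for i j
    using that by (simp add: Gij mult.commute)
  have psd: "0 \<le> qf N G x" for x
  proof -
    have "qf N G x = (\<Sum>i<N. \<Sum>j<N. \<Sum>k<N. x i * M $$ (i,k) * (x j * M $$ (j,k)))"
      unfolding qf_def by (intro sum.cong refl) (simp add: Gij sum_distrib_left sum_distrib_right mult_ac)
    also have "\<dots> = (\<Sum>i<N. \<Sum>k<N. \<Sum>j<N. x i * M $$ (i,k) * (x j * M $$ (j,k)))"
      by (rule sum.cong[OF refl], rule sum.swap)
    also have "\<dots> = (\<Sum>k<N. \<Sum>i<N. \<Sum>j<N. x i * M $$ (i,k) * (x j * M $$ (j,k)))"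
      by (rule sum.swap)
    also have "\<dots> = (\<Sum>k<N. (\<Sum>i<N. x i * M $$ (i,k)) * (\<Sum>j<N. x j * M $$ (j,k)))"
      by (simp add: sum_product)
    also have "\<dots> \<ge> 0" by (intro sum_nonneg) simp
    finally show ?thesis .
  qed
  have "det G \<le> (\<Prod>i<N. G $$ (i,i))" by (rule psd_det_le[OF Gc sym psd])
  also have "\<dots> = (\<Prod>i<N. \<Sum>j<N. (M $$ (i,j))^2)"
    by (intro prod.cong refl) (simp add: Gij power2_eq_square)
  finally show ?thesis using detG by simp
qed

lemma hadamard_bound:
  fixes M :: "real mat"
  assumes M: "M \<in> carrier_mat N N" and rows: "\<And>i. i < N \<Longrightarrow> (\<Sum>j<N. (M $$ (i,j))^2) \<le> 4"
  shows "\<bar>det M\<bar> \<le> 2 ^ N"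
proof -
  have "(det M)^2 \<le> (\<Prod>i<N. \<Sum>j<N. (M $$ (i,j))^2)" by (rule hadamard[OF M])
  also have "\<dots> \<le> (\<Prod>i<N. (4::real))"
    by (rule prod_mono) (simp add: rows sum_nonneg)
  also have "\<dots> = (2 ^ N)^2" by (simp add: power2_eq_square power_mult_distrib[symmetric])
  finally have "(det M)^2 \<le> (2 ^ N)^2" .
  then show ?thesis using abs_le_square_iff[of "det M" "2 ^ N"] by simp
qed



definition dotn :: "nat \<Rightarrow> (nat \<Rightarrow> real) \<Rightarrow> (nat \<Rightarrow> real) \<Rightarrow> real" where
  "dotn n a x = (\<Sum>l<n. a l * x l)"

definition kerR :: "nat \<Rightarrow> (nat \<Rightarrow> real) set \<Rightarrow> (nat \<Rightarrow> real) set" where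
  "kerR n R = {x. (\<forall>l\<ge>n. x l = 0) \<and> (\<forall>a\<in>R. dotn n a x = 0)}"

definition minor :: "(nat \<Rightarrow> real) list \<Rightarrow> nat list \<Rightarrow> real mat" where
  "minor as js = mat (length as) (length as) (\<lambda>(u,v). (as ! u) (js ! v))"

lemma minor_carrier: "minor as js \<in> carrier_mat (length as) (length as)"
  by (simp add: minor_def)

lemma det_Ints:
  fixes M :: "real mat"
  assumes "M \<in> carrier_mat N N" "\<And>i j. i < N \<Longrightarrow> j < N \<Longrightarrow> M $$ (i,j) \<in> \<int>"
  shows "det M \<in> \<int>"
proof -
  have "det M = (\<Sum>p \<in> {p. p permutes {0..<N}}. signof p * (\<Prod>i = 0..<N. M $$ (i, p i)))"
    by (rule det_def'[OF assms(1)])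
  also have "\<dots> \<in> \<int>"
  proof (intro Ints_sum Ints_mult Ints_prod)
    fix p i assume "p \<in> {p. p permutes {0..<N}}" "i \<in> {0..<N}"
    then show "M $$ (i, p i) \<in> \<int>" using assms(2) by (auto simp: permutes_in_image)
  qed simp
  finally show ?thesis .
qed

lemma minor_distinct:
  assumes "length js = length as" "det (minor as js) \<noteq> 0"
  shows "distinct js"
proof (rule ccontr)
  assume "\<not> distinct js"
  then obtain u v where uv: "u < length js" "v < length js" "u \<noteq> v" "js ! u = js ! v"
    by (auto simp: distinct_conv_nth)
  have "col (minor as js) u = col (minor as js) v"
    using uv assms(1) by (auto simp: minor_def)
  then have "det (minor as js) = 0"
    using uv assms(1) by (intro det_identical_columns[OF minor_carrier, of u v]) auto
  with assms(2) show False by simp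
qed

lemma sum_inj_le:
  fixes a :: "nat \<Rightarrow> real"
  assumes "inj_on f {..<k}" "f ` {..<k} \<subseteq> {..<n}"
  shows "(\<Sum>j<k. (a (f j))^2) \<le> (\<Sum>l<n. (a l)^2)"
proof -
  have "(\<Sum>j<k. (a (f j))^2) = (\<Sum>l\<in>f ` {..<k}. (a l)^2)"
    using sum.reindex[OF assms(1), of "\<lambda>l. (a l)^2"] by simp
  also have "\<dots> \<le> (\<Sum>l<n. (a l)^2)"
    by (rule sum_mono2) (use assms(2) in auto)
  finally show ?thesis .
qed

lemma bordered:
  assumes len: "length as = k" "length js = k" and dist: "distinct js"
    and jsn: "set js \<subseteq> {..<n}" and asR: "set as \<subseteq> R" and j: "j < n" "j \<notin> set js"
    and R_int: "\<And>a l. a \<in> R \<Longrightarrow> a l \<in> \<int>"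
    and R_norm: "\<And>a. a \<in> R \<Longrightarrow> (\<Sum>l<n. (a l)^2) \<le> 4"
    and nz: "det (minor as js) \<noteq> 0"
    and maxi: "\<And>a. a \<in> R \<Longrightarrow> det (minor (a # as) (js @ [j])) = 0"
  shows "\<exists>x. x \<in> kerR n R \<and> x j \<noteq> 0 \<and> (\<forall>l. l \<notin> set js \<and> l \<noteq> j \<longrightarrow> x l = 0)
             \<and> (\<forall>l. x l \<in> \<int>) \<and> (\<forall>l. \<bar>x l\<bar> \<le> 2 ^ k)"
proof -
  have asi: "as ! i \<in> R" if "i < k" for i using asR len that nth_mem by blast
  define cs where "cs = js @ [j]"
  have lcs: "length cs = Suc k" using len by (simp add: cs_def)
  have dcs: "distinct cs" using dist j by (simp add: cs_def)
  have csn: "cs ! v < n" if "v < Suc k" for v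
  proof (cases "v < k")
    case True
    then have "js ! v \<in> set js" using len by simp
    then have "js ! v < n" using jsn by blast
    then show ?thesis using True len by (simp add: cs_def nth_append)
  next
    case False
    then show ?thesis using that j len by (simp add: cs_def nth_append)
  qed
  define B where "B = (\<lambda>a. minor (a # as) cs)"
  have Bc: "B a \<in> carrier_mat (Suc k) (Suc k)" for a
    using len by (simp add: B_def minor_def)
  define z :: "nat \<Rightarrow> real" where "z = (\<lambda>_. 0)"
  define C where "C = (\<lambda>v. cofactor (B z) 0 v)"
  have del: "mat_delete (B a) 0 v = mat k k (\<lambda>(i,j'). (as ! i) (cs ! (if j' < v then j' else Suc j')))"
    if "v < Suc k" for a v
    using that len by (intro eq_matI) (auto simp: mat_delete_def B_def minor_def)
  have cof: "cofactor (B a) 0 v = C v" if "v < Suc k" for a v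
    unfolding C_def cofactor_def using del[OF that, of a] del[OF that, of z] by simp
  have detB: "det (B a) = (\<Sum>v<Suc k. a (cs ! v) * C v)" for a
  proof -
    have "det (B a) = (\<Sum>v<Suc k. B a $$ (0,v) * cofactor (B a) 0 v)"
      by (rule laplace_expansion_row[OF Bc]) simp
    also have "\<dots> = (\<Sum>v<Suc k. a (cs ! v) * C v)"
    proof (intro sum.cong refl)
      fix v assume "v \<in> {..<Suc k}"
      moreover have "B a $$ (0,v) = a (cs ! v)" if "v < Suc k" using that len by (simp add: B_def minor_def)
      ultimately show "B a $$ (0,v) * cofactor (B a) 0 v = a (cs ! v) * C v" using cof by simp
    qed
    finally show ?thesis .
  qed
  define x where "x = (\<lambda>l. \<Sum>v<Suc k. if cs ! v = l then C v else 0)"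
  have dot: "dotn n a x = det (B a)" for a
  proof -
    have "dotn n a x = (\<Sum>l<n. \<Sum>v<Suc k. a l * (if cs ! v = l then C v else 0))"
      unfolding dotn_def x_def by (simp only: sum_distrib_left)
    also have "\<dots> = (\<Sum>v<Suc k. \<Sum>l<n. a l * (if l = cs ! v then C v else 0))"
      by (subst sum.swap) (intro sum.cong refl, auto)
    also have "\<dots> = (\<Sum>v<Suc k. a (cs ! v) * C v)"
      by (intro sum.cong refl) (simp add: sum_one_pt csn)
    finally show ?thesis using detB by simp
  qed
  have xval: "x (cs ! v) = C v" if "v < Suc k" for v
  proof -
    have "x (cs ! v) = (\<Sum>v'<Suc k. C v' * (if v' = v then 1 else 0))"
      unfolding x_def using dcs lcs that by (intro sum.cong refl) (auto simp: nth_eq_iff_index_eq)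
    also have "\<dots> = C v" using sum_one_pt[OF that, of C 1] by simp
    finally show ?thesis .
  qed
  have xout: "x l = 0" if "l \<notin> set cs" for l
    unfolding x_def using that lcs by (intro sum.neutral) (auto)
  have Cint: "C v \<in> \<int>" if "v < Suc k" for v
  proof -
    have "det (mat_delete (B z) 0 v) \<in> \<int>"
      unfolding del[OF that] using R_int asi
      by (intro det_Ints[of _ k]) auto
    then show ?thesis unfolding C_def cofactor_def by simp
  qed
  have Cbound: "\<bar>C v\<bar> \<le> 2 ^ k" if v: "v < Suc k" for v
  proof -
    define f where "f = (\<lambda>j'. cs ! (if j' < v then j' else Suc j'))"
    have finj: "inj_on f {..<k}"
    proof (rule inj_onI)
      fix p q assume "p \<in> {..<k}" "q \<in> {..<k}" "f p = f q"
      then show "p = q" using dcs lcs unfolding f_def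
        by (auto simp: nth_eq_iff_index_eq split: if_splits)
    qed
    have fim: "f ` {..<k} \<subseteq> {..<n}" using csn by (auto simp: f_def)
    have "\<bar>det (mat_delete (B z) 0 v)\<bar> \<le> 2 ^ k"
      unfolding del[OF v]
    proof (rule hadamard_bound)
      show "mat k k (\<lambda>(i, j'). (as ! i) (cs ! (if j' < v then j' else Suc j'))) \<in> carrier_mat k k" by simp
      fix i assume i: "i < k"
      have "(\<Sum>j'<k. (mat k k (\<lambda>(i, j'). (as ! i) (cs ! (if j' < v then j' else Suc j'))) $$ (i, j'))\<^sup>2)
          = (\<Sum>j'<k. ((as ! i) (f j'))^2)" using i by (intro sum.cong refl) (simp add: f_def)
      also have "\<dots> \<le> (\<Sum>l<n. ((as ! i) l)^2)" by (rule sum_inj_le[OF finj fim])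
      also have "\<dots> \<le> 4" using R_norm asi i by auto
      finally show "(\<Sum>j'<k. (mat k k (\<lambda>(i, j'). (as ! i) (cs ! (if j' < v then j' else Suc j'))) $$ (i, j'))\<^sup>2) \<le> 4" .
    qed
    then show ?thesis unfolding C_def cofactor_def by (simp add: abs_mult)
  qed
  have Ck: "C k = (-1)^k * det (minor as js)"
  proof -
    have "mat_delete (B z) 0 k = minor as js"
      unfolding del[of k z, simplified] using len by (intro eq_matI) (auto simp: minor_def cs_def nth_append)
    then show ?thesis unfolding C_def cofactor_def by simp
  qed
  have csk: "cs ! k = j" using len by (simp add: cs_def nth_append)
  show ?thesis
  proof (intro exI conjI allI impI)
    show "x \<in> kerR n R"
      unfolding kerR_def
    proof (intro CollectI conjI allI impI ballI)
      fix l assume "n \<le> l"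
      then have "l \<notin> set cs" using csn lcs by (auto simp: in_set_conv_nth dest!: leD)
      then show "x l = 0" by (rule xout)
    next
      fix a assume "a \<in> R"
      then show "dotn n a x = 0" using dot maxi B_def cs_def by simp
    qed
    show "x j \<noteq> 0" using xval[of k] csk Ck nz by simp
  next
    fix l assume "l \<notin> set js \<and> l \<noteq> j"
    then show "x l = 0" by (intro xout) (simp add: cs_def)
  next
    fix l
    show "x l \<in> \<int>"
    proof (cases "l \<in> set cs")
      case True
      then obtain v where "v < Suc k" "l = cs ! v" using lcs by (auto simp: in_set_conv_nth)
      then show ?thesis using xval Cint by simp
    qed (simp add: xout)
    show "\<bar>x l\<bar> \<le> 2 ^ k"
    proof (cases "l \<in> set cs")
      case True
      then obtain v where "v < Suc k" "l = cs ! v" using lcs by (auto simp: in_set_conv_nth)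
      then show ?thesis using xval Cbound by simp
    qed (simp add: xout)
  qed
qed


lemma LA_main:
  assumes R_int: "\<And>a l. a \<in> R \<Longrightarrow> a l \<in> \<int>"
    and R_norm: "\<And>a. a \<in> R \<Longrightarrow> (\<Sum>l<n. (a l)^2) \<le> 4"
    and r: "r \<in> kerR n R" "l0 < n" "r l0 \<noteq> 0"
    and one: "\<And>x. x \<in> kerR n R \<Longrightarrow> \<exists>c. x = (\<lambda>l. c * r l)"
  shows "\<exists>w. w \<in> kerR n R \<and> (\<forall>l. w l \<in> \<int>) \<and> w \<noteq> (\<lambda>l. 0) \<and> (\<forall>l. \<bar>w l\<bar> \<le> 2 ^ (n - 1))"
proof -
  define K where "K = {k. \<exists>as js. length as = k \<and> length js = k \<and> set as \<subseteq> R \<and> set js \<subseteq> {..<n}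
                              \<and> det (minor as js) \<noteq> 0}"
  have K0: "0 \<in> K"
  proof -
    have "det (minor [] []) = 1" using minor_carrier[of "[]" "[]"] by simp
    then show ?thesis unfolding K_def by (intro CollectI exI[of _ "[]"]) simp
  qed
  have Kle: "K \<subseteq> {..n}"
  proof
    fix k assume "k \<in> K"
    then obtain as js where h: "length as = k" "length js = k" "set js \<subseteq> {..<n}" "det (minor as js) \<noteq> 0"
      unfolding K_def by blast
    then have "distinct js" using minor_distinct[of js as] by simp
    then have "k = card (set js)" using h by (simp add: distinct_card)
    also have "\<dots> \<le> card {..<n}" using h by (intro card_mono) auto
    finally show "k \<in> {..n}" by simp
  qed
  have finK: "finite K" using Kle finite_subset by blast
  define k where "k = Max K"
  have "k \<in> K" unfolding k_def using finK K0 by (intro Max_in) auto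
  then obtain as js where h: "length as = k" "length js = k" "set as \<subseteq> R" "set js \<subseteq> {..<n}"
      "det (minor as js) \<noteq> 0"
    unfolding K_def by blast
  have maxi: "det (minor as' js') = 0" if "length as' = Suc k" "length js' = Suc k" "set as' \<subseteq> R"
    "set js' \<subseteq> {..<n}" for as' js'
  proof (rule ccontr)
    assume "det (minor as' js') \<noteq> 0"
    then have "Suc k \<in> K" unfolding K_def using that by blast
    then have "Suc k \<le> k" unfolding k_def using finK by (intro Max_ge) auto
    then show False by simp
  qed
  have dist: "distinct js" using minor_distinct[of js as] h by simp
  have cardjs: "card (set js) = k" using dist h by (simp add: distinct_card)
  have kle: "k \<le> n" using \<open>k \<in> K\<close> Kle by auto
  have bord: "\<exists>x. x \<in> kerR n R \<and> x j \<noteq> 0 \<and> (\<forall>l. l \<notin> set js \<and> l \<noteq> j \<longrightarrow> x l = 0)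
             \<and> (\<forall>l. x l \<in> \<int>) \<and> (\<forall>l. \<bar>x l\<bar> \<le> 2 ^ k)" if "j < n" "j \<notin> set js" for j
  proof (rule bordered[where R=R and n=n, OF h(1,2) dist h(4,3) that])
    show "\<And>a l. a \<in> R \<Longrightarrow> a l \<in> \<int>" by (rule R_int)
    show "\<And>a. a \<in> R \<Longrightarrow> (\<Sum>l<n. (a l)\<^sup>2) \<le> 4" by (rule R_norm)
    show "det (minor as js) \<noteq> 0" by (rule h(5))
  next
    fix a assume "a \<in> R"
    then show "det (minor (a # as) (js @ [j])) = 0" using h that by (intro maxi) auto
  qed
  show ?thesis
  proof (cases "k = n")
    case True
    have setjs: "set js = {..<n}"
      using h(4) cardjs True by (intro card_subset_eq) auto
    define vv where "vv = vec n (\<lambda>u. r (js ! u))"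
    have Mc: "minor as js \<in> carrier_mat n n" using minor_carrier[of as js] h True by simp
    have "minor as js *\<^sub>v vv = 0\<^sub>v n"
    proof (rule eq_vecI)
      show "dim_vec (minor as js *\<^sub>v vv) = dim_vec (0\<^sub>v n)" using Mc by simp
      fix u assume "u < dim_vec (0\<^sub>v n)"
      then have u: "u < n" by simp
      have "(minor as js *\<^sub>v vv) $ u = (\<Sum>v<n. (as ! u) (js ! v) * r (js ! v))"
        using u Mc h True by (simp add: scalar_prod_def vv_def minor_def lessThan_atLeast0)
      also have "\<dots> = (\<Sum>l\<in>set js. (as ! u) l * r l)"
      proof -
        have inj: "inj_on (nth js) {..<n}" using dist h True by (intro inj_on_nth) auto
        have im: "nth js ` {..<n} = set js" using h True by (auto simp: set_conv_nth)
        show ?thesis using sum.reindex[OF inj, of "\<lambda>l. (as ! u) l * r l"] im by simp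
      qed
      also have "\<dots> = dotn n (as ! u) r" unfolding setjs dotn_def by simp
      also have "\<dots> = 0"
      proof -
        have "as ! u \<in> R" using h(3) h(1) u True nth_mem[of u as] by blast
        then show ?thesis using r(1) unfolding kerR_def by blast
      qed
      finally show "(minor as js *\<^sub>v vv) $ u = 0\<^sub>v n $ u" using u by simp
    qed
    moreover have "vv \<noteq> 0\<^sub>v n"
    proof
      assume z: "vv = 0\<^sub>v n"
      have "l0 \<in> set js" using setjs r(2) by simp
      then obtain u where u: "u < length js" "js ! u = l0" by (auto simp: in_set_conv_nth)
      then have "vv $ u = r l0" using h True by (simp add: vv_def)
      then show False using z u h True r(3) by simp
    qed
    moreover have "vv \<in> carrier_vec n" by (simp add: vv_def)
    ultimately have "det (minor as js) = 0" using det_0_iff_vec_prod_zero_field[OF Mc] by blast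
    with h(5) show ?thesis by simp
  next
    case False
    then have kn: "k < n" using kle by simp
    have cardD: "card ({..<n} - set js) = n - k"
      using h(4) cardjs by (simp add: card_Diff_subset)
    then obtain j where j: "j \<in> {..<n} - set js"
      using kn by (metis card.empty all_not_in_conv zero_less_diff less_irrefl_nat)
    show ?thesis
    proof (cases "Suc k = n")
      case True
      obtain x where x: "x \<in> kerR n R" "x j \<noteq> 0" "\<forall>l. x l \<in> \<int>" "\<forall>l. \<bar>x l\<bar> \<le> 2 ^ k"
        using bord[of j] j by auto
      show ?thesis
      proof (intro exI conjI)
        show "x \<noteq> (\<lambda>l. 0)" using x(2) by auto
        show "\<forall>l. \<bar>x l\<bar> \<le> 2 ^ (n - 1)" using x(4) True by auto
      qed (use x in auto)
    next
      case False
      then have "card (({..<n} - set js) - {j}) > 0" using cardD j kn by (simp add: card_Diff_singleton)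
      then obtain j2 where j2: "j2 \<in> ({..<n} - set js) - {j}"
        by (metis card.empty all_not_in_conv less_irrefl_nat)
      obtain x1 where x1: "x1 \<in> kerR n R" "x1 j \<noteq> 0" "\<forall>l. l \<notin> set js \<and> l \<noteq> j \<longrightarrow> x1 l = 0"
        using bord[of j] j by auto
      obtain x2 where x2: "x2 \<in> kerR n R" "x2 j2 \<noteq> 0"
        using bord[of j2] j2 by auto
      obtain c1 where c1: "x1 = (\<lambda>l. c1 * r l)" using one[OF x1(1)] by blast
      obtain c2 where c2: "x2 = (\<lambda>l. c2 * r l)" using one[OF x2(1)] by blast
      have "x1 j2 = 0" using x1(3) j2 by auto
      then have "c1 * r j2 = 0" using c1 by simp
      moreover have "c1 \<noteq> 0" using x1(2) c1 by auto
      ultimately have "r j2 = 0" by simp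
      then have "x2 j2 = 0" using c2 by simp
      with x2(2) show ?thesis by simp
    qed
  qed
qed



lemma lin_match:
  assumes "matching_eqns gl x" "matching_eqns gl y"
  shows "matching_eqns gl (\<lambda>i. a * x i + b * y i)"
  unfolding matching_eqns_def
proof (intro allI impI)
  fix T f T' s v assume h: "gl T f = Some (T', s) \<and> v < 4 \<and> v \<noteq> f"
  define p where "p = coord T v"
  define q where "q = coord T (quad f v)"
  define p' where "p' = coord T' (s v)"
  define q' where "q' = coord T' (quad (s f) (s v))"
  have e1: "x p + x q = x p' + x q'" and e2: "y p + y q = y p' + y q'"
    using assms h unfolding matching_eqns_def arc_sum_def p_def q_def p'_def q'_def by blast+
  have "a * (x p + x q) + b * (y p + y q) = a * (x p' + x q') + b * (y p' + y q')"
    using e1 e2 by simp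
  then show "arc_sum T f v (\<lambda>i. a * x i + b * y i) = arc_sum T' (s f) (s v) (\<lambda>i. a * x i + b * y i)"
    unfolding arc_sum_def p_def[symmetric] q_def[symmetric] p'_def[symmetric] q'_def[symmetric]
    by (simp add: distrib_left)
qed

lemma cone_lin:
  assumes "x \<in> haken_cone t gl" "y \<in> haken_cone t gl"
    and "\<And>i. i < 7 * t \<Longrightarrow> 0 \<le> a * x i + b * y i"
  shows "(\<lambda>i. a * x i + b * y i) \<in> haken_cone t gl"
  using assms lin_match[of gl x y a b] unfolding haken_cone_def by auto

definition sp :: "nat \<Rightarrow> (nat \<Rightarrow> real) \<Rightarrow> nat set" where
  "sp n x = {i. i < n \<and> x i \<noteq> 0}"

lemma cone_nonneg: "x \<in> haken_cone t gl \<Longrightarrow> 0 \<le> x i"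
  unfolding haken_cone_def by (cases "i < 7 * t") auto

lemma cone_zero: "x \<in> haken_cone t gl \<Longrightarrow> 7 * t \<le> i \<Longrightarrow> x i = 0"
  unfolding haken_cone_def by auto

lemma sp_empty: "x \<in> haken_cone t gl \<Longrightarrow> sp (7 * t) x = {} \<Longrightarrow> x = (\<lambda>i. 0)"
  unfolding fun_eq_iff
proof
  fix i assume x: "x \<in> haken_cone t gl" and e: "sp (7 * t) x = {}"
  show "x i = 0"
  proof (cases "i < 7 * t")
    case True then show ?thesis using e unfolding sp_def by auto
  next
    case False then show ?thesis using cone_zero[OF x, of i] by simp
  qed
qed

lemma sub_lemma:
  assumes x: "x \<in> haken_cone t gl" and y: "y \<in> haken_cone t gl" and ne: "sp (7 * t) y \<noteq> {}"
  obtains c i0 where "0 \<le> c" "\<And>i. c * y i \<le> x i" "i0 \<in> sp (7 * t) y" "x i0 = c * y i0"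
    "(\<lambda>i. x i - c * y i) \<in> haken_cone t gl"
proof -
  let ?P = "sp (7 * t) y"
  have fin: "finite ?P" unfolding sp_def by auto
  define c where "c = Min ((\<lambda>i. x i / y i) ` ?P)"
  have "c \<in> (\<lambda>i. x i / y i) ` ?P" unfolding c_def using fin ne by (intro Min_in) auto
  then obtain i0 where i0: "i0 \<in> ?P" "c = x i0 / y i0" by blast
  have ypos: "0 < y i" if "i \<in> ?P" for i using that cone_nonneg[OF y, of i] unfolding sp_def by auto
  have c0: "0 \<le> c" using i0 ypos[OF i0(1)] cone_nonneg[OF x, of i0] by simp
  have cle: "c * y i \<le> x i" for i
  proof (cases "i \<in> ?P")
    case True
    have "c \<le> x i / y i" unfolding c_def using fin True by (intro Min_le) auto
    then show ?thesis using ypos[OF True] by (simp add: pos_le_divide_eq)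
  next
    case False
    then have "y i = 0" unfolding sp_def using cone_zero[OF y, of i] by (cases "i < 7 * t") auto
    then show ?thesis using cone_nonneg[OF x, of i] by simp
  qed
  have eq: "x i0 = c * y i0" using i0 ypos[OF i0(1)] by simp
  have "(\<lambda>i. 1 * x i + (- c) * y i) \<in> haken_cone t gl"
    by (rule cone_lin[OF x y]) (use cle in auto)
  then have "(\<lambda>i. x i - c * y i) \<in> haken_cone t gl" by simp
  then show ?thesis by (rule that[OF c0 cle i0(1) eq])
qed



lemma ext_exists:
  assumes "x \<in> haken_cone t gl" "sp (7 * t) x \<noteq> {}"
  shows "\<exists>r. extreme_ray (haken_cone t gl) r \<and> sp (7 * t) r \<subseteq> sp (7 * t) x"
  using assms
proof (induction "card (sp (7 * t) x)" arbitrary: x rule: less_induct)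
  case less
  let ?C = "haken_cone t gl"
  let ?sp = "sp (7 * t)"
  have xnz: "x \<noteq> (\<lambda>i. 0)" using less.prems(2) unfolding sp_def by auto
  show ?case
  proof (cases "extreme_ray ?C x")
    case True then show ?thesis by blast
  next
    case False
    then obtain a b where ab: "a \<in> ?C" "b \<in> ?C" "(\<lambda>i. a i + b i) = x" "\<not> (a \<in> ray x \<and> b \<in> ray x)"
      using less.prems(1) xnz unfolding extreme_ray_def by blast
    have "\<exists>a'. a' \<in> ?C \<and> a' \<notin> ray x \<and> (\<forall>i. a' i \<le> x i)"
    proof (cases "a \<in> ray x")
      case True
      then have "b \<notin> ray x" using ab(4) by blast
      moreover have "b i \<le> x i" for i using fun_cong[OF ab(3), of i] cone_nonneg[OF ab(1), of i] by simp
      ultimately show ?thesis using ab(2) by blast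
    next
      case False
      moreover have "a i \<le> x i" for i using fun_cong[OF ab(3), of i] cone_nonneg[OF ab(2), of i] by simp
      ultimately show ?thesis using ab(1) by blast
    qed
    then obtain a' where a': "a' \<in> ?C" "a' \<notin> ray x" "\<And>i. a' i \<le> x i" by blast
    obtain c i0 where c: "0 \<le> c" "\<And>i. c * x i \<le> a' i" "i0 \<in> ?sp x" "a' i0 = c * x i0"
      "(\<lambda>i. a' i - c * x i) \<in> ?C"
      using sub_lemma[OF a'(1) less.prems(1) less.prems(2)] by blast
    define z where "z = (\<lambda>i. a' i - c * x i)"
    have zC: "z \<in> ?C" using c(5) by (simp add: z_def)
    have spz: "?sp z \<subseteq> ?sp x - {i0}"
    proof
      fix i assume i: "i \<in> ?sp z"
      then have i1: "i < 7 * t" "z i \<noteq> 0" unfolding sp_def by auto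
      have "x i \<noteq> 0"
      proof
        assume "x i = 0"
        then have "a' i = 0" using a'(3)[of i] cone_nonneg[OF a'(1), of i] by simp
        then show False using i1 \<open>x i = 0\<close> by (simp add: z_def)
      qed
      moreover have "i \<noteq> i0" using i1 c(4) by (auto simp: z_def)
      ultimately show "i \<in> ?sp x - {i0}" using i1 unfolding sp_def by auto
    qed
    have spz_ne: "?sp z \<noteq> {}"
    proof
      assume "?sp z = {}"
      then have "z = (\<lambda>i. 0)" using sp_empty[OF zC] by simp
      then have "a' = (\<lambda>i. c * x i)" by (auto simp: z_def fun_eq_iff)
      then have "a' \<in> ray x" using c(1) unfolding ray_def by blast
      with a'(2) show False by simp
    qed
    have fin: "finite (?sp x)" unfolding sp_def by auto
    have "card (?sp z) \<le> card (?sp x - {i0})" using spz fin by (intro card_mono) auto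
    also have "\<dots> < card (?sp x)" using fin c(3) by (intro card_Diff1_less)
    finally have "card (?sp z) < card (?sp x)" .
    then obtain r where r: "extreme_ray ?C r" "?sp r \<subseteq> ?sp z"
      using less.hyps zC spz_ne by blast
    then show ?thesis using spz by blast
  qed
qed

definition mrow :: "nat \<Rightarrow> nat \<Rightarrow> nat \<Rightarrow> nat \<Rightarrow> nat \<Rightarrow> real" where
  "mrow p q p' q' = (\<lambda>l. of_bool (l = p) + of_bool (l = q) - of_bool (l = p') - of_bool (l = q'))"

definition urow :: "nat \<Rightarrow> nat \<Rightarrow> real" where
  "urow i = (\<lambda>l. of_bool (l = i))"

lemma dot_ind:
  assumes "p < n"
  shows "dotn n (\<lambda>l. of_bool (l = p)) x = x p"
proof -
  have "dotn n (\<lambda>l. of_bool (l = p)) x = (\<Sum>l<n. x l * (if l = p then 1 else 0))"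
    unfolding dotn_def by (intro sum.cong refl) auto
  also have "\<dots> = x p" using sum_one_pt[OF assms, of x 1] by simp
  finally show ?thesis .
qed

lemma dot_mrow:
  assumes "p < n" "q < n" "p' < n" "q' < n"
  shows "dotn n (mrow p q p' q') x = x p + x q - x p' - x q'"
proof -
  have "dotn n (mrow p q p' q') x = dotn n (\<lambda>l. of_bool (l = p)) x + dotn n (\<lambda>l. of_bool (l = q)) x
      - dotn n (\<lambda>l. of_bool (l = p')) x - dotn n (\<lambda>l. of_bool (l = q')) x"
    unfolding dotn_def mrow_def by (simp add: sum.distrib sum_subtractf algebra_simps)
  then show ?thesis using dot_ind assms by simp
qed

lemma ind_sum_le: "(\<Sum>l<(n::nat). (of_bool (l = p) :: real)) \<le> 1"
proof (cases "p < n")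
  case True
  have "(\<Sum>l<n. (of_bool (l = p) :: real)) = (\<Sum>l<n. 1 * (if l = p then 1 else 0))"
    by (intro sum.cong refl) auto
  also have "\<dots> = 1" using sum_one_pt[OF True, of "\<lambda>_. 1" 1] by simp
  finally show ?thesis by simp
next
  case False
  then have "(\<Sum>l<n. (of_bool (l = p) :: real)) = 0" by (intro sum.neutral) auto
  then show ?thesis by simp
qed

lemma norm_mrow:
  assumes "p \<noteq> q" "p' \<noteq> q'"
  shows "(\<Sum>l<n. (mrow p q p' q' l)^2) \<le> 4"
proof -
  have "(mrow p q p' q' l)^2 \<le> of_bool (l = p) + of_bool (l = q) + of_bool (l = p') + of_bool (l = q')" for l
    using assms unfolding mrow_def
    by (cases "l = p"; cases "l = q"; cases "l = p'"; cases "l = q'") (simp_all add: power2_eq_square)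
  then have "(\<Sum>l<n. (mrow p q p' q' l)^2) \<le> (\<Sum>l<n. of_bool (l = p) + of_bool (l = q) + of_bool (l = p') + of_bool (l = q'))"
    by (intro sum_mono) simp
  also have "\<dots> = (\<Sum>l<n. (of_bool (l = p) :: real)) + (\<Sum>l<n. of_bool (l = q)) + (\<Sum>l<n. of_bool (l = p')) + (\<Sum>l<n. of_bool (l = q'))"
    by (simp add: sum.distrib)
  also have "\<dots> \<le> 4" using ind_sum_le[where n=n and p=p] ind_sum_le[where n=n and p=q] ind_sum_le[where n=n and p=p'] ind_sum_le[where n=n and p=q'] by linarith
  finally show ?thesis .
qed

lemma glue_facts:
  assumes "valid_gluing t gl" "gl T f = Some (T', s)" "v < 4" "v \<noteq> f"
  shows "T < t \<and> f < 4 \<and> T' < t \<and> s f < 4 \<and> s v < 4 \<and> s f \<noteq> s v"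
proof -
  have "T < t" "f < 4" using assms(1,2) unfolding valid_gluing_def by (metis not_le option.distinct(1))+
  moreover have "T' < t" and bij: "bij_betw s {..<4} {..<4}" using assms(1,2) unfolding valid_gluing_def by blast+
  moreover have "s f < 4" "s v < 4" using bij \<open>f < 4\<close> assms(3) bij_betw_apply by fastforce+
  moreover have "s f \<noteq> s v" using bij \<open>f < 4\<close> assms(3,4) bij_betw_imp_inj_on inj_on_eq_iff
    by (metis lessThan_iff)
  ultimately show ?thesis by blast
qed

lemma quad_bounds:
  assumes "f < 4" "v < 4" "v \<noteq> f"
  shows "4 \<le> quad f v \<and> quad f v \<le> 6"
proof -
  have "f = 0 \<or> f = 1 \<or> f = 2 \<or> f = 3" "v = 0 \<or> v = 1 \<or> v = 2 \<or> v = 3" using assms by auto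
  then show ?thesis using assms(3) unfolding quad_def by auto
qed

lemma coord_lt: "T < t \<Longrightarrow> d \<le> 6 \<Longrightarrow> coord T d < 7 * t"
  unfolding coord_def by linarith

lemma dot_match:
  assumes "valid_gluing t gl" "gl T f = Some (T', s)" "v < 4" "v \<noteq> f"
  shows "dotn (7 * t) (mrow (coord T v) (coord T (quad f v)) (coord T' (s v)) (coord T' (quad (s f) (s v)))) x
       = arc_sum T f v x - arc_sum T' (s f) (s v) x"
    and "coord T v \<noteq> coord T (quad f v)" "coord T' (s v) \<noteq> coord T' (quad (s f) (s v))"
proof -
  have g: "T < t \<and> f < 4 \<and> T' < t \<and> s f < 4 \<and> s v < 4 \<and> s f \<noteq> s v" by (rule glue_facts[OF assms])
  have q1: "4 \<le> quad f v \<and> quad f v \<le> 6" using quad_bounds g assms by blast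
  have q2: "4 \<le> quad (s f) (s v) \<and> quad (s f) (s v) \<le> 6" using quad_bounds g by metis
  show "dotn (7 * t) (mrow (coord T v) (coord T (quad f v)) (coord T' (s v)) (coord T' (quad (s f) (s v)))) x
       = arc_sum T f v x - arc_sum T' (s f) (s v) x"
    using g q1 q2 assms(3) by (subst dot_mrow) (auto intro!: coord_lt simp: arc_sum_def)
  show "coord T v \<noteq> coord T (quad f v)" using q1 assms(3) by (simp add: coord_def)
  show "coord T' (s v) \<noteq> coord T' (quad (s f) (s v))" using q2 g by (simp add: coord_def)
qed



lemma CL:
  assumes vg: "valid_gluing t gl" and ext: "extreme_ray (haken_cone t gl) r"
  shows "\<exists>w\<in>ray r. w \<noteq> (\<lambda>i. 0) \<and> is_integral w \<and> (\<forall>i. w i \<le> 2 ^ (7 * t - 1))"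
proof -
  let ?C = "haken_cone t gl"
  define n where "n = 7 * t"
  have rC: "r \<in> ?C" and rnz: "r \<noteq> (\<lambda>i. 0)"
    and rext: "\<And>a b. a \<in> ?C \<Longrightarrow> b \<in> ?C \<Longrightarrow> (\<lambda>i. a i + b i) = r \<Longrightarrow> a \<in> ray r \<and> b \<in> ray r"
    using ext unfolding extreme_ray_def by auto
  define Rm where "Rm = {mrow (coord T v) (coord T (quad f v)) (coord T' (s v)) (coord T' (quad (s f) (s v)))
                        | T f T' s v. gl T f = Some (T', s) \<and> v < 4 \<and> v \<noteq> f}"
  define Rz where "Rz = {urow i | i. i < n \<and> r i = 0}"
  define R where "R = Rm \<union> Rz"
  have R_int: "a l \<in> \<int>" if "a \<in> R" for a l
    using that unfolding R_def Rm_def Rz_def mrow_def urow_def of_bool_def by auto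
  have R_norm: "(\<Sum>l<n. (a l)^2) \<le> 4" if "a \<in> R" for a
  proof -
    from that consider "a \<in> Rm" | "a \<in> Rz" unfolding R_def by blast
    then show ?thesis
    proof cases
      case 1
      then obtain T f T' s v where h: "gl T f = Some (T', s)" "v < 4" "v \<noteq> f"
        "a = mrow (coord T v) (coord T (quad f v)) (coord T' (s v)) (coord T' (quad (s f) (s v)))"
        unfolding Rm_def by blast
      show ?thesis using h(4) norm_mrow dot_match(2,3)[OF vg h(1-3)] by simp
    next
      case 2
      then obtain i where "a = urow i" unfolding Rz_def by blast
      then have "(\<Sum>l<n. (a l)^2) = (\<Sum>l<n. (of_bool (l = i)::real))"
        by (intro sum.cong refl) (simp add: urow_def)
      then show ?thesis using ind_sum_le[where n=n and p=i] by simp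
    qed
  qed
  have kerI: "x \<in> kerR n R" if x: "\<forall>l\<ge>n. x l = 0" "matching_eqns gl x" "\<forall>i<n. r i = 0 \<longrightarrow> x i = 0" for x
    unfolding kerR_def
  proof (intro CollectI conjI ballI)
    show "\<forall>l\<ge>n. x l = 0" by (rule x(1))
    fix a assume "a \<in> R"
    then consider "a \<in> Rm" | "a \<in> Rz" unfolding R_def by blast
    then show "dotn n a x = 0"
    proof cases
      case 1
      then obtain T f T' s v where h: "gl T f = Some (T', s)" "v < 4" "v \<noteq> f"
        "a = mrow (coord T v) (coord T (quad f v)) (coord T' (s v)) (coord T' (quad (s f) (s v)))"
        unfolding Rm_def by blast
      then show ?thesis using dot_match(1)[OF vg h(1-3), of x] x(2) unfolding matching_eqns_def n_def by simp
    next
      case 2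
      then obtain i where "a = urow i" "i < n" "r i = 0" unfolding Rz_def by blast
      then show ?thesis using dot_ind[of i n x] x(3) by (simp add: urow_def)
    qed
  qed
  have kerD: "matching_eqns gl x \<and> (\<forall>i<n. r i = 0 \<longrightarrow> x i = 0) \<and> (\<forall>l\<ge>n. x l = 0)"
    if "x \<in> kerR n R" for x
  proof -
    have z: "\<forall>l\<ge>n. x l = 0" and d: "\<And>a. a \<in> R \<Longrightarrow> dotn n a x = 0"
      using that unfolding kerR_def by auto
    have "matching_eqns gl x" unfolding matching_eqns_def
    proof (intro allI impI)
      fix T f T' s v assume h: "gl T f = Some (T', s) \<and> v < 4 \<and> v \<noteq> f"
      then have "mrow (coord T v) (coord T (quad f v)) (coord T' (s v)) (coord T' (quad (s f) (s v))) \<in> R"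
        unfolding R_def Rm_def by blast
      then have "dotn n (mrow (coord T v) (coord T (quad f v)) (coord T' (s v)) (coord T' (quad (s f) (s v)))) x = 0"
        by (rule d)
      then show "arc_sum T f v x = arc_sum T' (s f) (s v) x"
        using dot_match(1)[OF vg, of T f T' s v x] h unfolding n_def by simp
    qed
    moreover have "\<forall>i<n. r i = 0 \<longrightarrow> x i = 0"
    proof (intro allI impI)
      fix i assume i: "i < n" "r i = 0"
      then have "urow i \<in> R" unfolding R_def Rz_def by blast
      then show "x i = 0" using d dot_ind[of i n x] i by (simp add: urow_def)
    qed
    ultimately show ?thesis using z by blast
  qed
  have rker: "r \<in> kerR n R"
    using rC by (intro kerI) (auto simp: haken_cone_def n_def)
  obtain l0 where l0: "l0 < n" "r l0 \<noteq> 0"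
  proof -
    obtain l where "r l \<noteq> 0" using rnz by auto
    moreover have "l < n" using cone_zero[OF rC, of l] calculation unfolding n_def by (meson not_le)
    ultimately show ?thesis using that by blast
  qed
  have one: "\<exists>c. x = (\<lambda>l. c * r l)" if "x \<in> kerR n R" for x
  proof -
    from kerD[OF that] have xm: "matching_eqns gl x" and xz: "\<And>i. i < n \<Longrightarrow> r i = 0 \<Longrightarrow> x i = 0"
      and xo: "\<And>l. n \<le> l \<Longrightarrow> x l = 0" by auto
    define P where "P = sp n r"
    have finP: "finite P" unfolding P_def sp_def by auto
    have l0P: "l0 \<in> P" using l0 unfolding P_def sp_def by auto
    have rpos: "0 < r i" if "i \<in> P" for i
      using that cone_nonneg[OF rC, of i] unfolding P_def sp_def by auto
    define e where "e = Min ((\<lambda>i. r i / (\<bar>x i\<bar> + 1)) ` P)"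
    have "e \<in> (\<lambda>i. r i / (\<bar>x i\<bar> + 1)) ` P" unfolding e_def using finP l0P by (intro Min_in) auto
    then obtain i0 where "i0 \<in> P" "e = r i0 / (\<bar>x i0\<bar> + 1)" by blast
    then have epos: "0 < e" using rpos[of i0] by (simp add: add_pos_nonneg)
    have ebound: "e * \<bar>x i\<bar> \<le> r i" for i
    proof (cases "i \<in> P")
      case True
      have "e \<le> r i / (\<bar>x i\<bar> + 1)" unfolding e_def using finP True by (intro Min_le) auto
      then have "e * (\<bar>x i\<bar> + 1) \<le> r i" by (simp add: pos_le_divide_eq add_pos_nonneg)
      then show ?thesis using epos by (simp add: algebra_simps)
    next
      case False
      have "x i = 0"
      proof (cases "i < n")
        case True
        then have "r i = 0" using False unfolding P_def sp_def by auto
        then show ?thesis using xz True by simp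
      qed (use xo in simp)
      then show ?thesis using cone_nonneg[OF rC, of i] by simp
    qed
    have rmatch: "matching_eqns gl r" using rC unfolding haken_cone_def by auto
    define a where "a = (\<lambda>i. (1/2) * r i + (e/2) * x i)"
    define b where "b = (\<lambda>i. (1/2) * r i + (- e/2) * x i)"
    have ab_nonneg: "0 \<le> (1/2) * r i + (e/2) * x i" "0 \<le> (1/2) * r i + (- e/2) * x i" for i
    proof -
      have "\<bar>e * x i\<bar> \<le> r i" using ebound[of i] epos by (simp add: abs_mult)
      then show "0 \<le> (1/2) * r i + (e/2) * x i" "0 \<le> (1/2) * r i + (- e/2) * x i" by (simp_all add: abs_le_iff)
    qed
    have am: "matching_eqns gl a" unfolding a_def by (rule lin_match[OF rmatch xm])
    have bm: "matching_eqns gl b" unfolding b_def by (rule lin_match[OF rmatch xm])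
    have aC: "a \<in> ?C" unfolding haken_cone_def
      using am ab_nonneg cone_zero[OF rC] xo unfolding n_def by (auto simp: a_def)
    have bC: "b \<in> ?C" unfolding haken_cone_def
      using bm ab_nonneg cone_zero[OF rC] xo unfolding n_def by (auto simp: b_def)
    have "(\<lambda>i. a i + b i) = r" unfolding a_def b_def by (auto simp: fun_eq_iff algebra_simps)
    then have "a \<in> ray r" using rext aC bC by blast
    then obtain c where c: "a = (\<lambda>i. c * r i)" unfolding ray_def by blast
    have "x = (\<lambda>l. ((2 * c - 1) / e) * r l)"
    proof
      fix l
      have "(1/2) * r l + (e/2) * x l = c * r l" using fun_cong[OF c, of l] by (simp add: a_def)
      then show "x l = ((2 * c - 1) / e) * r l" using epos by (simp add: field_simps)
    qed
    then show ?thesis by blast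
  qed
  obtain w where w: "w \<in> kerR n R" "\<forall>l. w l \<in> \<int>" "w \<noteq> (\<lambda>l. 0)" "\<forall>l. \<bar>w l\<bar> \<le> 2 ^ (n - 1)"
  proof -
    have "\<exists>w. w \<in> kerR n R \<and> (\<forall>l. w l \<in> \<int>) \<and> w \<noteq> (\<lambda>l. 0) \<and> (\<forall>l. \<bar>w l\<bar> \<le> 2 ^ (n - 1))"
    proof (rule LA_main[of R n r l0])
      show "\<And>a l. a \<in> R \<Longrightarrow> a l \<in> \<int>" by (rule R_int)
      show "\<And>a. a \<in> R \<Longrightarrow> (\<Sum>l<n. (a l)\<^sup>2) \<le> 4" by (rule R_norm)
      show "\<And>x. x \<in> kerR n R \<Longrightarrow> \<exists>c. x = (\<lambda>l. c * r l)" by (rule one)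
    qed (use rker l0 in auto)
    then show ?thesis using that by blast
  qed
  obtain c where c: "w = (\<lambda>l. c * r l)" using one[OF w(1)] by blast
  define w' where "w' = (\<lambda>l. \<bar>c\<bar> * r l)"
  have w'eq: "w' = w \<or> w' = (\<lambda>l. - w l)" unfolding w'_def c by (cases "0 \<le> c") auto
  show ?thesis
  proof (intro bexI conjI)
    show "w' \<in> ray r" unfolding ray_def w'_def by auto
    show "w' \<noteq> (\<lambda>i. 0)" using w'eq w(3) by (auto simp: fun_eq_iff)
    show "is_integral w'" using w'eq w(2) unfolding is_integral_def by auto
    show "\<forall>i. w' i \<le> 2 ^ (7 * t - 1)"
    proof
      fix i
      have "w' i \<le> \<bar>w i\<bar>" using w'eq by auto
      then show "w' i \<le> 2 ^ (7 * t - 1)" using w(4) unfolding n_def by (meson order_trans)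
    qed
  qed
qed



lemma ray_cone: "r \<in> haken_cone t gl \<Longrightarrow> w \<in> ray r \<Longrightarrow> w \<in> haken_cone t gl"
proof -
  assume rC: "r \<in> haken_cone t gl" and "w \<in> ray r"
  then obtain c where c: "0 \<le> c" "w = (\<lambda>i. c * r i)" unfolding ray_def by blast
  have "(\<lambda>i. c * r i + 0 * r i) \<in> haken_cone t gl"
    by (rule cone_lin[OF rC rC]) (use c(1) cone_nonneg[OF rC] in auto)
  then show ?thesis using c(2) by simp
qed

lemma decomp:
  assumes vg: "valid_gluing t gl"
  shows "v \<in> haken_cone t gl \<Longrightarrow> \<exists>k \<mu> ws. k \<le> card (sp (7 * t) v) \<and>
     (\<forall>j<k. 0 \<le> \<mu> j \<and> ws j \<in> haken_cone t gl \<and> is_integral (ws j) \<and> ws j \<noteq> (\<lambda>i. 0)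
            \<and> (\<forall>i. ws j i \<le> 2 ^ (7 * t - 1)))
     \<and> v = (\<lambda>i. \<Sum>j<k. \<mu> j * ws j i)"
proof (induction "card (sp (7 * t) v)" arbitrary: v rule: less_induct)
  case less
  let ?C = "haken_cone t gl"
  let ?sp = "sp (7 * t)"
  show ?case
  proof (cases "?sp v = {}")
    case True
    then have "v = (\<lambda>i. 0)" using sp_empty[OF less.prems] by simp
    then show ?thesis by (intro exI[of _ 0]) auto
  next
    case False
    obtain r where r: "extreme_ray ?C r" "?sp r \<subseteq> ?sp v" using ext_exists[OF less.prems False] by blast
    have rC: "r \<in> ?C" using r(1) unfolding extreme_ray_def by blast
    obtain w where w: "w \<in> ray r" "w \<noteq> (\<lambda>i. 0)" "is_integral w" "\<forall>i. w i \<le> 2 ^ (7 * t - 1)"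
      using CL[OF vg r(1)] by blast
    have wC: "w \<in> ?C" by (rule ray_cone[OF rC w(1)])
    have spw: "?sp w \<subseteq> ?sp r"
    proof -
      obtain c where "w = (\<lambda>i. c * r i)" using w(1) unfolding ray_def by blast
      then show ?thesis unfolding sp_def by auto
    qed
    have spw_ne: "?sp w \<noteq> {}" using sp_empty[OF wC] w(2) by blast
    obtain m i0 where m: "0 \<le> m" "\<And>i. m * w i \<le> v i" "i0 \<in> ?sp w" "v i0 = m * w i0"
      "(\<lambda>i. v i - m * w i) \<in> ?C"
      using sub_lemma[OF less.prems wC spw_ne] by blast
    define v' where "v' = (\<lambda>i. v i - m * w i)"
    have v'C: "v' \<in> ?C" using m(5) by (simp add: v'_def)
    have spv': "?sp v' \<subseteq> ?sp v - {i0}"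
    proof
      fix i assume i: "i \<in> ?sp v'"
      then have i1: "i < 7 * t" "v' i \<noteq> 0" unfolding sp_def by auto
      have "v i \<noteq> 0"
      proof
        assume "v i = 0"
        moreover have "0 \<le> m * w i" using m(1) cone_nonneg[OF wC, of i] by simp
        ultimately have "m * w i = 0" using m(2)[of i] by simp
        then show False using i1 \<open>v i = 0\<close> by (simp add: v'_def)
      qed
      moreover have "i \<noteq> i0" using i1 m(4) by (auto simp: v'_def)
      ultimately show "i \<in> ?sp v - {i0}" using i1 unfolding sp_def by auto
    qed
    have i0v: "i0 \<in> ?sp v" using m(3) spw r(2) by blast
    have fin: "finite (?sp v)" unfolding sp_def by auto
    have "card (?sp v') \<le> card (?sp v - {i0})" using spv' fin by (intro card_mono) auto
    also have "\<dots> < card (?sp v)" using fin i0v by (intro card_Diff1_less)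
    finally have lt: "card (?sp v') < card (?sp v)" .
    obtain k \<mu> ws where IH: "k \<le> card (?sp v')"
      "\<forall>j<k. 0 \<le> \<mu> j \<and> ws j \<in> ?C \<and> is_integral (ws j) \<and> ws j \<noteq> (\<lambda>i. 0) \<and> (\<forall>i. ws j i \<le> 2 ^ (7 * t - 1))"
      "v' = (\<lambda>i. \<Sum>j<k. \<mu> j * ws j i)"
      using less.hyps[OF lt v'C] by blast
    define \<mu>' where "\<mu>' = \<mu>(k := m)"
    define ws' where "ws' = ws(k := w)"
    show ?thesis
    proof (intro exI conjI)
      show "Suc k \<le> card (?sp v)" using IH(1) lt by simp
      show "\<forall>j<Suc k. 0 \<le> \<mu>' j \<and> ws' j \<in> ?C \<and> is_integral (ws' j) \<and> ws' j \<noteq> (\<lambda>i. 0)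
              \<and> (\<forall>i. ws' j i \<le> 2 ^ (7 * t - 1))"
        using IH(2) m(1) wC w by (auto simp: \<mu>'_def ws'_def less_Suc_eq)
      show "v = (\<lambda>i. \<Sum>j<Suc k. \<mu>' j * ws' j i)"
      proof
        fix i
        have "(\<Sum>j<Suc k. \<mu>' j * ws' j i) = (\<Sum>j<k. \<mu> j * ws j i) + m * w i"
          by (simp add: \<mu>'_def ws'_def)
        also have "\<dots> = v' i + m * w i" using IH(3) by simp
        also have "\<dots> = v i" by (simp add: v'_def)
        finally show "v i = (\<Sum>j<Suc k. \<mu>' j * ws' j i)" by simp
      qed
    qed
  qed
qed



lemma pow_bound:
  assumes "0 < t" "real k \<le> 7 * real t"
  shows "real k * 2 ^ (7 * t - 1) \<le> real t * 2 ^ (7 * t + 2)"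
proof -
  have e: "7 * t + 2 = (7 * t - 1) + 3" using assms(1) by simp
  have "(2::real) ^ (7 * t + 2) = 2 ^ (7 * t - 1) * 8" unfolding e power_add by simp
  moreover have "real k * 2 ^ (7 * t - 1) \<le> (7 * real t) * 2 ^ (7 * t - 1)"
    using assms(2) by (intro mult_right_mono) auto
  ultimately show ?thesis by simp
qed

theorem lemma6p1:
  fixes t :: nat and gl :: gluing
  assumes "triangulated_3manifold t gl"
  shows "(\<forall>v. minimal_vertex_solution t gl v \<longrightarrow> (\<forall>i < 7 * t. v i \<le> 2 ^ (7 * t - 1)))
       \<and> (\<forall>v \<in> hilbert_basis t gl. \<forall>i < 7 * t. v i \<le> real t * 2 ^ (7 * t + 2))"
proof (intro conjI allI impI ballI)
  have vg: "valid_gluing t gl" using assms unfolding triangulated_3manifold_def by blast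
  let ?C = "haken_cone t gl"
  {
    fix v i assume mv: "minimal_vertex_solution t gl v" and i: "i < 7 * t"
    then obtain r where r: "extreme_ray ?C r" "v \<in> ray r" "v \<noteq> (\<lambda>i. 0)" "is_integral v"
      "\<forall>w\<in>ray r. w \<noteq> (\<lambda>i. 0) \<and> is_integral w \<longrightarrow> (\<exists>c\<ge>1. w = (\<lambda>i. c * v i))"
      unfolding minimal_vertex_solution_def by blast
    have rC: "r \<in> ?C" using r(1) unfolding extreme_ray_def by blast
    obtain w where w: "w \<in> ray r" "w \<noteq> (\<lambda>i. 0)" "is_integral w" "\<forall>i. w i \<le> 2 ^ (7 * t - 1)"
      using CL[OF vg r(1)] by blast
    obtain c where c: "c \<ge> 1" "w = (\<lambda>i. c * v i)" using r(5) w by blast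
    have v0: "0 \<le> v i" using cone_nonneg[OF ray_cone[OF rC r(2)]] by simp
    have "v i \<le> c * v i" using mult_right_mono[OF c(1) v0] by simp
    also have "\<dots> = w i" using c(2) by simp
    also have "\<dots> \<le> 2 ^ (7 * t - 1)" using w(4) by simp
    finally show "v i \<le> 2 ^ (7 * t - 1)" .
  }
  {
    fix v i assume hb: "v \<in> hilbert_basis t gl" and i: "i < 7 * t"
    have tpos: "0 < t" using i by simp
    have vC: "v \<in> ?C" and vI: "is_integral v" and vnz: "v \<noteq> (\<lambda>i. 0)"
      and irr: "\<not> (\<exists>a b. a \<in> ?C \<and> b \<in> ?C \<and> is_integral a \<and> is_integral b \<and>
            a \<noteq> (\<lambda>i. 0) \<and> b \<noteq> (\<lambda>i. 0) \<and> v = (\<lambda>i. a i + b i))"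
      using hb unfolding hilbert_basis_def by blast+
    obtain k \<mu> ws where d: "k \<le> card (sp (7 * t) v)"
      "\<forall>j<k. 0 \<le> \<mu> j \<and> ws j \<in> ?C \<and> is_integral (ws j) \<and> ws j \<noteq> (\<lambda>i. 0) \<and> (\<forall>i. ws j i \<le> 2 ^ (7 * t - 1))"
      "v = (\<lambda>i. \<Sum>j<k. \<mu> j * ws j i)"
      using decomp[OF vg vC] by blast
    have kle: "k \<le> 7 * t"
    proof -
      have "card (sp (7 * t) v) \<le> card {..<7 * t}" unfolding sp_def by (intro card_mono) auto
      then show ?thesis using d(1) by simp
    qed
    have terms_nonneg: "0 \<le> \<mu> j * ws j i'" if "j < k" for j i'
      using d(2) that cone_nonneg[of "ws j" t gl i'] by auto
    show "v i \<le> real t * 2 ^ (7 * t + 2)"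
    proof (cases "\<exists>j<k. 1 \<le> \<mu> j")
      case True
      then obtain j where j: "j < k" "1 \<le> \<mu> j" by blast
      have wsC: "ws j \<in> ?C" and wsI: "is_integral (ws j)" and wsnz: "ws j \<noteq> (\<lambda>i. 0)"
        and wsb: "\<forall>i. ws j i \<le> 2 ^ (7 * t - 1)" using d(2) j(1) by auto
      have ge: "ws j i' \<le> v i'" for i'
      proof -
        have "ws j i' \<le> \<mu> j * ws j i'" using mult_right_mono[OF j(2) cone_nonneg[OF wsC, of i']] by simp
        also have "\<dots> \<le> (\<Sum>j'<k. \<mu> j' * ws j' i')"
          using terms_nonneg j(1) by (intro member_le_sum) auto
        also have "\<dots> = v i'" using d(3) by simp
        finally show ?thesis .
      qed
      define u where "u = (\<lambda>i'. 1 * v i' + (-1) * ws j i')"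
      have uC: "u \<in> ?C" unfolding u_def by (rule cone_lin[OF vC wsC]) (use ge in auto)
      have uI: "is_integral u" using vI wsI unfolding is_integral_def u_def by auto
      have vsum: "v = (\<lambda>i'. ws j i' + u i')" by (auto simp: u_def)
      show ?thesis
      proof (cases "u = (\<lambda>i. 0)")
        case True
        then have "v i = ws j i" using vsum by (simp add: fun_eq_iff)
        also have "\<dots> \<le> 2 ^ (7 * t - 1)" using wsb by simp
        also have "\<dots> = real 1 * 2 ^ (7 * t - 1)" by simp
        also have "\<dots> \<le> real t * 2 ^ (7 * t + 2)" using tpos by (intro pow_bound) auto
        finally show ?thesis .
      next
        case False
        then have False using irr wsC uC wsI uI wsnz vsum by blast
        then show ?thesis ..
      qed
    next
      case False
      have "v i = (\<Sum>j<k. \<mu> j * ws j i)" using d(3) by simp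
      also have "\<dots> \<le> (\<Sum>j<k. (2::real) ^ (7 * t - 1))"
      proof (intro sum_mono)
        fix j assume j: "j \<in> {..<k}"
        then have "\<mu> j < 1" "0 \<le> \<mu> j" "0 \<le> ws j i" "ws j i \<le> 2 ^ (7 * t - 1)"
          using False d(2) cone_nonneg[of "ws j" t gl i] by auto
        then have "\<mu> j * ws j i \<le> 1 * ws j i" by (intro mult_right_mono) auto
        also have "\<dots> \<le> 2 ^ (7 * t - 1)" using \<open>ws j i \<le> 2 ^ (7 * t - 1)\<close> by simp
        finally show "\<mu> j * ws j i \<le> 2 ^ (7 * t - 1)" .
      qed
      also have "\<dots> = real k * 2 ^ (7 * t - 1)" by simp
      also have "\<dots> \<le> real t * 2 ^ (7 * t + 2)" using tpos kle by (intro pow_bound) auto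
      finally show ?thesis .
    qed
  }
qed

end
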